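(* Let $\{\phi_j\}_{j\in\mathbb Z}$ be the Fourier basis $\phi_j(t)=e^{\mathrm ij\pi t}$, $T=\{t_n\}_{n=1}^N\subseteq[-1,1]$ scattered points with density $h$, and suppose $hM\le1$. Then $$F(h,M,R)\lesssim\sqrt M\sup_{i\notin\{-R,\dots,R-1\}}\{1/w_i\}.$$ Moreover, if the weights satisfy $w_i\gtrsim|i|$ and $R\ge M$, then $$F(h,M,R)\lesssim h\sqrt M\sup_{i\notin\{-R,\dots,R-1\}}\{|i|/w_i\}.$$
   Context: Fourier setting: $D=(-1,1)$, $\nu=1/2$. $h=\sup_{t\in(-1,1)}\min_n|t-t_n|$; Voronoi cells $V_n=\{t\in(-1,1):|t-t_n|\le|t-t_m|\ \forall m\ne n\}$; $\tau_n=\int_{V_n}\nu$. $U_{n,j}=\sqrt{\tau_n}\phi_j(t_n)$, $j\in\mathbb Z$. Positive weights $w_i\ge1$, $i\in\mathbb Z$, $W=\mathrm{diag}(w_i)_{i\in\mathbb Z}$. For $L\in\mathbb N$, $P_L$ is the coordinate projection onto $\{-L,\dots,L-1\}$ and $P_L^\perp=I-P_L$. $F(h,M,R)=\|P_R^\perp W^{-1}U^*UP_M\|_\infty$ ($\ell^\infty$ operator norm). $a\lesssim b$ means $a\le Cb$ with $C$ independent of $h$, $M$, $R$, $N$, $T$. *)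

theory Defs
  imports "HOL-Analysis.Analysis"
begin

definition phi :: "int \<Rightarrow> real \<Rightarrow> complex" where
  "phi j t = exp (\<i> * complex_of_real (real_of_int j * pi * t))"

definition idx :: "nat \<Rightarrow> int set" where
  "idx L = {- int L ..< int L}"

definition density :: "real set \<Rightarrow> real" where
  "density T = (SUP t\<in>{-1<..<1}. Min ((\<lambda>s. \<bar>t - s\<bar>) ` T))"

definition voronoi :: "real set \<Rightarrow> real \<Rightarrow> real set" where
  "voronoi T s = {t \<in> {-1<..<1}. \<forall>s'\<in>T. s' \<noteq> s \<longrightarrow> \<bar>t - s\<bar> \<le> \<bar>t - s'\<bar>}"

text \<open>tau_n = nu(V_n), with nu = Lebesgue measure / 2.\<close>
definition tau :: "real set \<Rightarrow> real \<Rightarrow> real" where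
  "tau T s = measure lborel (voronoi T s) / 2"

definition Umat :: "real set \<Rightarrow> real \<Rightarrow> int \<Rightarrow> complex" where
  "Umat T s j = complex_of_real (sqrt (tau T s)) * phi j s"

definition Pproj :: "nat \<Rightarrow> (int \<Rightarrow> complex) \<Rightarrow> int \<Rightarrow> complex" where
  "Pproj L x = (\<lambda>j. if j \<in> idx L then x j else 0)"

definition Pperp :: "nat \<Rightarrow> (int \<Rightarrow> complex) \<Rightarrow> int \<Rightarrow> complex" where
  "Pperp L x = (\<lambda>j. if j \<in> idx L then 0 else x j)"

definition Winv :: "(int \<Rightarrow> real) \<Rightarrow> (int \<Rightarrow> complex) \<Rightarrow> int \<Rightarrow> complex" where
  "Winv w x = (\<lambda>i. x i / complex_of_real (w i))"

definition Uop :: "real set \<Rightarrow> (int \<Rightarrow> complex) \<Rightarrow> real \<Rightarrow> complex" where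
  "Uop T x = (\<lambda>s. infsum (\<lambda>j. Umat T s j * x j) UNIV)"

definition Ustar :: "real set \<Rightarrow> (real \<Rightarrow> complex) \<Rightarrow> int \<Rightarrow> complex" where
  "Ustar T y = (\<lambda>i. \<Sum>s\<in>T. cnj (Umat T s i) * y s)"

text \<open>F(h,M,R) = l-infinity operator norm of P_R^perp W^-1 U^* U P_M.\<close>
definition Fnorm :: "real set \<Rightarrow> (int \<Rightarrow> real) \<Rightarrow> nat \<Rightarrow> nat \<Rightarrow> real" where
  "Fnorm T w M R =
     (SUP x\<in>{x :: int \<Rightarrow> complex. \<forall>j. cmod (x j) \<le> 1}.
        SUP i. cmod (Pperp R (Winv w (Ustar T (Uop T (Pproj M x)))) i))"

end

theory Submission
  imports Defs
begin


lemma phi_deriv: "((\<lambda>t. phi j t) has_vector_derivative (\<i> * of_real (real_of_int j * pi)) * phi j t) (at t)"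
proof -
  have 1: "((\<lambda>t. \<i> * complex_of_real (real_of_int j * pi * t)) has_vector_derivative \<i> * of_real (real_of_int j * pi)) (at t)"
    by (auto intro!: derivative_eq_intros)
  have "((exp \<circ> (\<lambda>t. \<i> * complex_of_real (real_of_int j * pi * t))) has_vector_derivative
     (\<i> * of_real (real_of_int j * pi)) * exp (\<i> * complex_of_real (real_of_int j * pi * t))) (at t)"
    by (rule field_vector_diff_chain_at[OF 1]) (rule DERIV_exp)
  then show ?thesis unfolding phi_def o_def .
qed

lemma phi_mult: "phi j t * phi k t = phi (j + k) t"
  unfolding phi_def by (simp add: exp_add[symmetric] algebra_simps)

lemma cnj_phi: "cnj (phi j t) = phi (-j) t"
  unfolding phi_def by (simp add: exp_cnj)

lemma norm_phi[simp]: "norm (phi j t) = 1"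
  unfolding phi_def by simp

lemma phi_cis: "phi j t = cis (real_of_int j * pi * t)"
  unfolding phi_def cis_conv_exp by simp

lemma phi_int_pm: "phi m 1 = phi m (-1)"
proof -
  have "sin (real_of_int m * pi) = 0"
    using sin_zero_iff_int2 by auto
  then show ?thesis unfolding phi_cis
    by (simp add: complex_eq_iff)
qed


lemma phi_integral: "(phi m has_integral (if m = 0 then 2 else 0)) {-1..1}"
proof (cases "m = 0")
  case True
  have "phi m = (\<lambda>t. 1)" using True unfolding phi_def by auto
  then show ?thesis using True has_integral_const_real[of "1::complex" "-1" 1] by (simp add: scaleR_conv_of_real)
next
  case False
  define a where "a = \<i> * complex_of_real (real_of_int m * pi)"
  have a0: "a \<noteq> 0" using False by (simp add: a_def)
  have "((\<lambda>t. phi m t / a) has_vector_derivative phi m x) (at x within {-1..1})" for x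
  proof -
    have "((\<lambda>t. phi m t / a) has_vector_derivative (a * phi m x) / a) (at x)"
      using phi_deriv[of m x] unfolding a_def[symmetric]
      by (intro derivative_eq_intros) auto
    then show ?thesis using a0 by (auto intro: has_vector_derivative_at_within)
  qed
  from fundamental_theorem_of_calculus[of "-1" 1 "\<lambda>t. phi m t / a" "phi m", OF _ this]
  show ?thesis using False phi_int_pm[of m] by simp
qed

definition tp :: "int set \<Rightarrow> (int \<Rightarrow> complex) \<Rightarrow> real \<Rightarrow> complex" where
  "tp J c t = (\<Sum>j\<in>J. c j * phi j t)"

definition dco :: "(int \<Rightarrow> complex) \<Rightarrow> int \<Rightarrow> complex" where
  "dco c j = c j * (\<i> * of_real (real_of_int j * pi))"

lemma tp_deriv: "(tp J c has_vector_derivative tp J (dco c) t) (at t)"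
  unfolding tp_def dco_def
  by (intro has_vector_derivative_sum derivative_eq_intros phi_deriv)
     (auto simp: algebra_simps intro!: phi_deriv)

lemma continuous_tp: "continuous_on S (tp J c)"
  unfolding tp_def phi_def by (intro continuous_intros)

lemma parseval:
  assumes "finite J"
  shows "((\<lambda>t. (norm (tp J c t))^2) has_integral 2 * (\<Sum>j\<in>J. (norm (c j))^2)) {-1..1}"
proof -
  have eq: "complex_of_real ((norm (tp J c t))^2) = (\<Sum>j\<in>J. \<Sum>k\<in>J. (c j * cnj (c k)) * phi (j - k) t)" for t
  proof -
    have "complex_of_real ((norm (tp J c t))^2) = tp J c t * cnj (tp J c t)"
      by (metis complex_norm_square of_real_power)
    also have "\<dots> = (\<Sum>j\<in>J. \<Sum>k\<in>J. (c j * phi j t) * (cnj (c k) * phi (-k) t))"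
      unfolding tp_def by (simp add: sum_product cnj_phi)
    also have "\<dots> = (\<Sum>j\<in>J. \<Sum>k\<in>J. (c j * cnj (c k)) * phi (j - k) t)"
      by (intro sum.cong refl) (simp add: phi_mult algebra_simps)
    finally show ?thesis .
  qed
  have "((\<lambda>t. \<Sum>j\<in>J. \<Sum>k\<in>J. (c j * cnj (c k)) * phi (j - k) t) has_integral
        (\<Sum>j\<in>J. \<Sum>k\<in>J. (c j * cnj (c k)) * (if j - k = 0 then 2 else 0))) {-1..1}"
    using assms by (intro has_integral_sum has_integral_mult_right phi_integral)
  also have "(\<Sum>j\<in>J. \<Sum>k\<in>J. (c j * cnj (c k)) * (if j - k = 0 then 2 else 0)) = (\<Sum>j\<in>J. c j * cnj (c j) * 2)"
    using assms by (intro sum.cong refl) (simp add: if_distrib sum.delta cong: if_cong)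
  also have "\<dots> = complex_of_real (2 * (\<Sum>j\<in>J. (norm (c j))^2))"
    by (simp add: complex_norm_square sum_distrib_left mult.commute del: of_real_power)
  finally have "((\<lambda>t. complex_of_real ((norm (tp J c t))^2)) has_integral complex_of_real (2 * (\<Sum>j\<in>J. (norm (c j))^2))) {-1..1}"
    unfolding eq .
  from has_integral_linear[OF this bounded_linear_Re]
  show ?thesis by (simp add: o_def)
qed


lemma integrable_norm_tp: "(\<lambda>t. norm (tp J c t)) integrable_on {a..b}"
  by (intro integrable_continuous_real continuous_on_norm continuous_tp)

lemma l1_bound:
  assumes "finite J"
  shows "integral {-1..1} (\<lambda>t. norm (tp J c t)) \<le> 2 * sqrt (\<Sum>j\<in>J. (norm (c j))^2)"
proof -
  define S where "S = (\<Sum>j\<in>J. (norm (c j))^2)"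
  show ?thesis
  proof (cases "S = 0")
    case True
    then have "\<forall>j\<in>J. c j = 0" using assms unfolding S_def by (simp add: sum_nonneg_eq_0_iff)
    then have "tp J c t = 0" for t unfolding tp_def by simp
    then show ?thesis unfolding S_def[symmetric] using True by simp
  next
    case False
    have S0: "S > 0" using False unfolding S_def by (metis sum_nonneg zero_le_power2 less_eq_real_def)
    define a where "a = sqrt S"
    have a0: "a > 0" using S0 by (simp add: a_def)
    have aa: "a * a = S" using S0 by (simp add: a_def)
    have pt: "norm (tp J c t) \<le> (norm (tp J c t))^2 / (2*a) + a / 2" for t
    proof -
      have "0 \<le> (norm (tp J c t) - a)^2" by simp
      then have "2 * a * norm (tp J c t) \<le> (norm (tp J c t))^2 + a * a"
        by (simp add: power2_eq_square algebra_simps)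
      then show ?thesis using a0 by (simp add: field_simps)
    qed
    have i1: "((\<lambda>t. (norm (tp J c t))^2 / (2*a) + a / 2) has_integral (2 * S / (2*a) + 2 * (a/2))) {-1..1}"
    proof (intro has_integral_add)
      show "((\<lambda>t. (norm (tp J c t))^2 / (2*a)) has_integral 2 * S / (2*a)) {-1..1}"
        using has_integral_divide[OF parseval[OF assms, of c], of "2*a"] unfolding S_def by simp
      show "((\<lambda>t::real. a / 2) has_integral 2 * (a / 2)) {-1..1}"
        using has_integral_const_real[of "a/2" "-1::real" "1::real"] by simp
    qed
    have "integral {-1..1} (\<lambda>t. norm (tp J c t)) \<le> 2 * S / (2*a) + 2 * (a/2)"
      by (rule has_integral_le[OF integrable_integral[OF integrable_norm_tp] i1]) (use pt in auto)
    also have "\<dots> = 2 * a" using a0 aa by (simp add: field_simps)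
    finally show ?thesis unfolding a_def S_def .
  qed
qed


lemma vor_sub: "voronoi T s \<subseteq> {-1<..<1}"
  unfolding voronoi_def by auto

lemma vor_eq: "voronoi T s = {-1<..<1} \<inter> (\<Inter>s'\<in>T-{s}. {t. \<bar>t - s\<bar> \<le> \<bar>t - s'\<bar>})"
  unfolding voronoi_def by auto

lemma vor_borel: "voronoi T s \<in> sets borel"
proof -
  have "closed (\<Inter>s'\<in>T-{s}. {t. \<bar>t - s\<bar> \<le> \<bar>t - s'\<bar>})"
    by (intro closed_INT ballI closed_Collect_le continuous_intros)
  then show ?thesis unfolding vor_eq
    using borel_open[of "{-1<..<1::real}"] borel_closed by (intro sets.Int) auto
qed

lemma vor_leb: "voronoi T s \<in> sets lebesgue"
  using vor_borel by (metis sets_completionI_sets sets_lborel)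

lemma vor_lmeas: "voronoi T s \<in> lmeasurable"
  by (intro bounded_set_imp_lmeasurable vor_leb bounded_subset[OF _ vor_sub]) auto

lemma vor_measure: "measure lborel (voronoi T s) = integral (voronoi T s) (\<lambda>x. 1::real)"
proof -
  have "measure lborel (voronoi T s) = measure lebesgue (voronoi T s)"
    using vor_borel by (metis measure_completion sets_lborel)
  then show ?thesis using lmeasure_integral[OF vor_lmeas] by simp
qed

lemma vor_integrable:
  fixes f :: "real \<Rightarrow> 'b::euclidean_space"
  assumes "continuous_on {-1..1} f"
  shows "f integrable_on voronoi T s"
proof -
  have "set_integrable lebesgue {-1..1} f"
    using absolutely_integrable_continuous_real[OF assms] .
  then have "set_integrable lebesgue (voronoi T s) f"
    by (rule set_integrable_subset) (use vor_leb vor_sub[of T s] in auto)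
  then show ?thesis by (rule set_lebesgue_integral_eq_integral(1))
qed

lemma vor_dist:
  assumes "finite T" "s \<in> T" "t \<in> voronoi T s" "T \<subseteq> {-1..1}"
  shows "\<bar>t - s\<bar> \<le> density T"
proof -
  have t: "t \<in> {-1<..<1}" "\<forall>s'\<in>T. \<bar>t - s\<bar> \<le> \<bar>t - s'\<bar>"
    using assms(3) unfolding voronoi_def by auto
  have "Min ((\<lambda>s. \<bar>t - s\<bar>) ` T) = \<bar>t - s\<bar>"
    using assms t by (intro Min_eqI) auto
  moreover have "Min ((\<lambda>s'. \<bar>t - s'\<bar>) ` T) \<le> density T"
    unfolding density_def
  proof (rule cSUP_upper[OF t(1)])
    show "bdd_above ((\<lambda>t. Min ((\<lambda>s. \<bar>t - s\<bar>) ` T)) ` {-1<..<1})"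
    proof (rule bdd_aboveI2)
      fix u :: real assume u: "u \<in> {-1<..<1}"
      have "Min ((\<lambda>s'. \<bar>u - s'\<bar>) ` T) \<le> \<bar>u - s\<bar>"
        using assms by (intro Min_le) auto
      also have "\<dots> \<le> 2" using u assms(2,4) by force
      finally show "Min ((\<lambda>s'. \<bar>u - s'\<bar>) ` T) \<le> 2" .
    qed
  qed
  ultimately show ?thesis by simp
qed

lemma vor_segment:
  assumes "s \<in> T" "t \<in> voronoi T s" "T \<subseteq> {-1..1}"
  shows "{min t s<..<max t s} \<subseteq> voronoi T s"
proof
  fix u assume u: "u \<in> {min t s<..<max t s}"
  have t: "t \<in> {-1<..<1}" "\<forall>s'\<in>T. s' \<noteq> s \<longrightarrow> \<bar>t - s\<bar> \<le> \<bar>t - s'\<bar>"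
    using assms(2) unfolding voronoi_def by auto
  have s1: "-1 \<le> s" "s \<le> 1" using assms by auto
  show "u \<in> voronoi T s"
    unfolding voronoi_def
  proof (intro CollectI conjI ballI impI)
    show "u \<in> {-1<..<1}" using u t(1) s1 by auto
    fix s' assume "s' \<in> T" "s' \<noteq> s"
    then have "\<bar>t - s\<bar> \<le> \<bar>t - s'\<bar>" using t by auto
    then show "\<bar>u - s\<bar> \<le> \<bar>u - s'\<bar>" using u by (auto simp: abs_if split: if_splits)
  qed
qed

lemma vor_inter:
  assumes "s \<in> T" "s' \<in> T" "s \<noteq> s'"
  shows "voronoi T s \<inter> voronoi T s' \<subseteq> {(s + s')/2}"
proof
  fix t assume "t \<in> voronoi T s \<inter> voronoi T s'"
  then have "\<bar>t - s\<bar> \<le> \<bar>t - s'\<bar>" "\<bar>t - s'\<bar> \<le> \<bar>t - s\<bar>"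
    using assms unfolding voronoi_def by auto
  then have "\<bar>t - s\<bar> = \<bar>t - s'\<bar>" by simp
  then show "t \<in> {(s + s')/2}" using assms(3) by (auto simp: abs_if split: if_splits)
qed

lemma vor_union:
  assumes "finite T" "T \<noteq> {}"
  shows "(\<Union>s\<in>T. voronoi T s) = {-1<..<1}"
proof
  show "(\<Union>s\<in>T. voronoi T s) \<subseteq> {-1<..<1}" using vor_sub by blast
  show "{-1<..<1} \<subseteq> (\<Union>s\<in>T. voronoi T s)"
  proof
    fix t :: real assume t: "t \<in> {-1<..<1}"
    obtain s where s: "s \<in> T" "\<forall>s'\<in>T. \<bar>t - s\<bar> \<le> \<bar>t - s'\<bar>"
    proof -
      have "Min ((\<lambda>s. \<bar>t - s\<bar>) ` T) \<in> (\<lambda>s. \<bar>t - s\<bar>) ` T"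
        using assms by (intro Min_in) auto
      then obtain s where "s \<in> T" "Min ((\<lambda>s. \<bar>t - s\<bar>) ` T) = \<bar>t - s\<bar>" by auto
      moreover have "\<forall>s'\<in>T. Min ((\<lambda>s. \<bar>t - s\<bar>) ` T) \<le> \<bar>t - s'\<bar>"
        using assms by auto
      ultimately show ?thesis using that by auto
    qed
    then show "t \<in> (\<Union>s\<in>T. voronoi T s)" using t unfolding voronoi_def by auto
  qed
qed

lemma vor_sum_integral:
  fixes f :: "real \<Rightarrow> 'b::euclidean_space"
  assumes "finite T" "T \<noteq> {}" "continuous_on {-1..1} f"
  shows "(\<Sum>s\<in>T. integral (voronoi T s) f) = integral {-1..1} f"
proof -
  have "(f has_integral (\<Sum>s\<in>T. integral (voronoi T s) f)) (\<Union>s\<in>T. voronoi T s)"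
  proof (rule has_integral_UN[OF assms(1)])
    show "\<And>s. s \<in> T \<Longrightarrow> (f has_integral integral (voronoi T s) f) (voronoi T s)"
      using vor_integrable[OF assms(3)] by blast
    show "pairwise (\<lambda>i i'. negligible (voronoi T i \<inter> voronoi T i')) T"
      unfolding pairwise_def
      by (metis negligible_subset negligible_sing vor_inter)
  qed
  then have "(f has_integral (\<Sum>s\<in>T. integral (voronoi T s) f)) {-1<..<1}"
    using vor_union[OF assms(1,2)] by simp
  then show ?thesis
    by (metis has_integral_Icc_iff_Ioo integral_unique)
qed


lemma cell_pt:
  fixes g g' :: "real \<Rightarrow> complex"
  assumes T: "T \<subseteq> {-1..1}" and s: "s \<in> T" and t: "t \<in> voronoi T s"
    and dg: "\<And>t. (g has_vector_derivative g' t) (at t)" and cg': "continuous_on UNIV g'"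
  shows "norm (g s - g t) \<le> integral (voronoi T s) (\<lambda>u. norm (g' u))"
proof -
  define a where "a = min t s"
  define b where "b = max t s"
  have ab: "a \<le> b" unfolding a_def b_def by simp
  have cn: "continuous_on A (\<lambda>u. norm (g' u))" for A
    using cg' by (intro continuous_on_norm) (auto intro: continuous_on_subset)
  have "(g' has_integral (g b - g a)) {a..b}"
    by (rule fundamental_theorem_of_calculus[OF ab]) (use dg in \<open>auto intro: has_vector_derivative_at_within\<close>)
  then have "g b - g a = integral {a..b} g'" by (simp add: integral_unique)
  moreover have "norm (g s - g t) = norm (g b - g a)"
    unfolding a_def b_def by (cases "t \<le> s") (auto simp: norm_minus_commute)
  ultimately have "norm (g s - g t) = norm (integral {a..b} g')" by simp
  also have "\<dots> \<le> integral {a..b} (\<lambda>u. norm (g' u))"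
    by (intro integral_norm_bound_integral integrable_continuous_real cn continuous_on_subset[OF cg']) auto
  also have "\<dots> = integral {a<..<b} (\<lambda>u. norm (g' u))"
    by (rule integral_open_interval_real)
  also have "\<dots> \<le> integral (voronoi T s) (\<lambda>u. norm (g' u))"
  proof (rule integral_subset_le)
    show "{a<..<b} \<subseteq> voronoi T s" unfolding a_def b_def by (rule vor_segment[OF s t T])
    show "(\<lambda>u. norm (g' u)) integrable_on {a<..<b}"
      by (simp add: integrable_on_open_interval_real integrable_continuous_real cn)
    show "(\<lambda>u. norm (g' u)) integrable_on voronoi T s"
      by (rule vor_integrable[OF cn])
  qed auto
  finally show ?thesis .
qed

lemma cell:
  fixes g g' :: "real \<Rightarrow> complex"
  assumes T: "T \<subseteq> {-1..1}" and s: "s \<in> T"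
    and dg: "\<And>t. (g has_vector_derivative g' t) (at t)" and cg': "continuous_on UNIV g'"
  shows "norm (measure lborel (voronoi T s) *\<^sub>R g s - integral (voronoi T s) g)
     \<le> measure lborel (voronoi T s) * integral (voronoi T s) (\<lambda>u. norm (g' u))"
proof -
  define V where "V = voronoi T s"
  define K where "K = integral V (\<lambda>u. norm (g' u))"
  define m where "m = measure lborel V"
  have cg: "continuous_on A g" for A
    using dg by (meson continuous_at_imp_continuous_on has_vector_derivative_continuous)
  have i1: "(\<lambda>x. 1::real) integrable_on V" unfolding V_def by (rule vor_integrable) simp
  have m: "((\<lambda>x. 1::real) has_integral m) V"
    using i1 vor_measure[of T s] unfolding m_def V_def by (simp add: has_integral_integral)
  have "((\<lambda>x. (1::real) *\<^sub>R g s) has_integral m *\<^sub>R g s) V"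
    by (rule has_integral_scaleR_left[OF m])
  then have "((\<lambda>x. g s - g x) has_integral (m *\<^sub>R g s - integral V g)) V"
    using vor_integrable[OF cg, of T s] unfolding V_def
    by (intro has_integral_diff) (auto simp: has_integral_integral)
  then have eq: "m *\<^sub>R g s - integral V g = integral V (\<lambda>x. g s - g x)" by (simp add: integral_unique)
  have "norm (integral V (\<lambda>x. g s - g x)) \<le> integral V (\<lambda>x. 1 * K)"
  proof (rule integral_norm_bound_integral)
    show "(\<lambda>x. g s - g x) integrable_on V" unfolding V_def
      by (intro vor_integrable continuous_intros cg)
    show "(\<lambda>x. 1 * K) integrable_on V" using i1 by (rule integrable_on_mult_left)
    show "\<And>x. x \<in> V \<Longrightarrow> norm (g s - g x) \<le> 1 * K"
      unfolding K_def V_def using cell_pt[OF T s _ dg cg'] by simp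
  qed
  also have "\<dots> = m * K" using integral_unique[OF has_integral_mult_left[OF m, of K]] by simp
  finally show ?thesis using eq unfolding V_def K_def m_def by simp
qed


lemma density_nonneg:
  assumes "finite T" "T \<noteq> {}" "T \<subseteq> {-1..1}"
  shows "0 \<le> density T"
proof -
  have "(0::real) \<in> (\<Union>s\<in>T. voronoi T s)" using vor_union[OF assms(1,2)] by simp
  then obtain s where "s \<in> T" "0 \<in> voronoi T s" by auto
  from vor_dist[OF assms(1) this assms(3)] show ?thesis by linarith
qed

lemma vor_meas_le:
  assumes "finite T" "T \<noteq> {}" "T \<subseteq> {-1..1}" "s \<in> T"
  shows "measure lborel (voronoi T s) \<le> 2 * density T"
proof -
  define h where "h = density T"
  have h0: "0 \<le> h" unfolding h_def by (rule density_nonneg[OF assms(1-3)])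
  have "integral (voronoi T s) (\<lambda>x. 1::real) \<le> integral {s-h..s+h} (\<lambda>x. 1::real)"
  proof (rule integral_subset_le)
    show "voronoi T s \<subseteq> {s - h..s + h}"
    proof
      fix x assume "x \<in> voronoi T s"
      then have "\<bar>x - s\<bar> \<le> h" using vor_dist[OF assms(1,4) _ assms(3)] unfolding h_def by blast
      then show "x \<in> {s - h..s + h}" by (auto simp: abs_le_iff)
    qed
    show "(\<lambda>x. 1::real) integrable_on voronoi T s" by (rule vor_integrable) simp
  qed auto
  also have "\<dots> = 2 * h" using h0 by simp
  finally show ?thesis using vor_measure[of T s] unfolding h_def by simp
qed

lemma meas_nonneg: "0 \<le> measure lborel (voronoi T s)" by simp

lemma quad1:
  fixes g g' :: "real \<Rightarrow> complex"
  assumes T: "finite T" "T \<noteq> {}" "T \<subseteq> {-1..1}"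
    and dg: "\<And>t. (g has_vector_derivative g' t) (at t)" and cg': "continuous_on UNIV g'"
  shows "(\<Sum>s\<in>T. measure lborel (voronoi T s) * norm (g s))
    \<le> integral {-1..1} (\<lambda>u. norm (g u)) + 2 * density T * integral {-1..1} (\<lambda>u. norm (g' u))"
proof -
  have cg: "continuous_on A g" for A
    using dg by (meson continuous_at_imp_continuous_on has_vector_derivative_continuous)
  have cn: "continuous_on A (\<lambda>u. norm (g' u))" for A
    using cg' by (intro continuous_on_norm) (auto intro: continuous_on_subset)
  have cn2: "continuous_on A (\<lambda>u. norm (g u))" for A
    using cg by (intro continuous_on_norm)
  have "measure lborel (voronoi T s) * norm (g s) \<le>
     integral (voronoi T s) (\<lambda>u. norm (g u)) + 2 * density T * integral (voronoi T s) (\<lambda>u. norm (g' u))"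
    if s: "s \<in> T" for s
  proof -
    define m where "m = measure lborel (voronoi T s)"
    define K where "K = integral (voronoi T s) (\<lambda>u. norm (g' u))"
    have K0: "0 \<le> K" unfolding K_def by (intro integral_nonneg vor_integrable cn) auto
    have "m * norm (g s) = norm (m *\<^sub>R g s)" unfolding m_def by simp
    also have "\<dots> \<le> norm (integral (voronoi T s) g) + norm (m *\<^sub>R g s - integral (voronoi T s) g)"
      by (metis add.commute norm_triangle_sub)
    also have "\<dots> \<le> integral (voronoi T s) (\<lambda>u. norm (g u)) + m * K"
    proof (rule add_mono)
      show "norm (integral (voronoi T s) g) \<le> integral (voronoi T s) (\<lambda>u. norm (g u))"
        by (intro integral_norm_bound_integral vor_integrable cg cn2) auto
      show "norm (m *\<^sub>R g s - integral (voronoi T s) g) \<le> m * K"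
        unfolding m_def K_def by (rule cell[OF T(3) s dg cg'])
    qed
    also have "\<dots> \<le> integral (voronoi T s) (\<lambda>u. norm (g u)) + 2 * density T * K"
      using vor_meas_le[OF T s] K0 unfolding m_def by (intro add_left_mono mult_right_mono) auto
    finally show ?thesis unfolding m_def K_def .
  qed
  then have "(\<Sum>s\<in>T. measure lborel (voronoi T s) * norm (g s)) \<le>
     (\<Sum>s\<in>T. integral (voronoi T s) (\<lambda>u. norm (g u)) + 2 * density T * integral (voronoi T s) (\<lambda>u. norm (g' u)))"
    by (rule sum_mono)
  also have "\<dots> = integral {-1..1} (\<lambda>u. norm (g u)) + 2 * density T * integral {-1..1} (\<lambda>u. norm (g' u))"
    by (simp add: sum.distrib sum_distrib_left[symmetric] vor_sum_integral[OF T(1,2) cn] vor_sum_integral[OF T(1,2) cn2])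
  finally show ?thesis .
qed

lemma quad2:
  fixes g g' :: "real \<Rightarrow> complex"
  assumes T: "finite T" "T \<noteq> {}" "T \<subseteq> {-1..1}"
    and dg: "\<And>t. (g has_vector_derivative g' t) (at t)" and cg': "continuous_on UNIV g'"
  shows "norm ((\<Sum>s\<in>T. measure lborel (voronoi T s) *\<^sub>R g s) - integral {-1..1} g)
    \<le> 2 * density T * integral {-1..1} (\<lambda>u. norm (g' u))"
proof -
  have cg: "continuous_on A g" for A
    using dg by (meson continuous_at_imp_continuous_on has_vector_derivative_continuous)
  have cn: "continuous_on A (\<lambda>u. norm (g' u))" for A
    using cg' by (intro continuous_on_norm) (auto intro: continuous_on_subset)
  have "norm ((\<Sum>s\<in>T. measure lborel (voronoi T s) *\<^sub>R g s) - integral {-1..1} g)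
      = norm (\<Sum>s\<in>T. measure lborel (voronoi T s) *\<^sub>R g s - integral (voronoi T s) g)"
    by (simp add: sum_subtractf vor_sum_integral[OF T(1,2) cg])
  also have "\<dots> \<le> (\<Sum>s\<in>T. norm (measure lborel (voronoi T s) *\<^sub>R g s - integral (voronoi T s) g))"
    by (rule norm_sum)
  also have "\<dots> \<le> (\<Sum>s\<in>T. 2 * density T * integral (voronoi T s) (\<lambda>u. norm (g' u)))"
  proof (rule sum_mono)
    fix s assume s: "s \<in> T"
    have K0: "0 \<le> integral (voronoi T s) (\<lambda>u. norm (g' u))"
      by (intro integral_nonneg vor_integrable cn) auto
    have "norm (measure lborel (voronoi T s) *\<^sub>R g s - integral (voronoi T s) g)
       \<le> measure lborel (voronoi T s) * integral (voronoi T s) (\<lambda>u. norm (g' u))"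
      by (rule cell[OF T(3) s dg cg'])
    also have "\<dots> \<le> 2 * density T * integral (voronoi T s) (\<lambda>u. norm (g' u))"
      using vor_meas_le[OF T s] K0 by (intro mult_right_mono) auto
    finally show "norm (measure lborel (voronoi T s) *\<^sub>R g s - integral (voronoi T s) g)
       \<le> 2 * density T * integral (voronoi T s) (\<lambda>u. norm (g' u))" .
  qed
  also have "\<dots> = 2 * density T * integral {-1..1} (\<lambda>u. norm (g' u))"
    by (simp add: sum_distrib_left[symmetric] vor_sum_integral[OF T(1,2) cn])
  finally show ?thesis .
qed



definition gfun :: "nat \<Rightarrow> (int \<Rightarrow> complex) \<Rightarrow> int \<Rightarrow> real \<Rightarrow> complex" where
  "gfun M x i t = (\<Sum>j\<in>idx M. x j * phi (j - i) t)"

lemma finite_idx[simp]: "finite (idx M)" unfolding idx_def by simp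
lemma card_idx: "card (idx M) = 2 * M" unfolding idx_def by simp
lemma idx_abs: "j \<in> idx M \<Longrightarrow> \<bar>real_of_int j\<bar> \<le> real M" unfolding idx_def by auto

lemma tau_nonneg: "0 \<le> tau T s" unfolding tau_def by simp

lemma Uop_eq: "Uop T (Pproj M x) s = complex_of_real (sqrt (tau T s)) * tp (idx M) x s"
proof -
  have "Uop T (Pproj M x) s = infsum (\<lambda>j. Umat T s j * x j) (idx M)"
    unfolding Uop_def by (rule infsum_cong_neutral) (auto simp: Pproj_def)
  also have "\<dots> = (\<Sum>j\<in>idx M. Umat T s j * x j)" by simp
  also have "\<dots> = complex_of_real (sqrt (tau T s)) * tp (idx M) x s"
    unfolding Umat_def tp_def by (simp add: sum_distrib_left algebra_simps)
  finally show ?thesis .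
qed

lemma cnj_phi_mult: "cnj (phi i t) * phi j t = phi (j - i) t"
  by (simp add: cnj_phi phi_mult)

lemma gfun_eq: "gfun M x i t = cnj (phi i t) * tp (idx M) x t"
  unfolding gfun_def tp_def sum_distrib_left
  by (intro sum.cong refl) (metis cnj_phi_mult mult.left_commute)

lemma Ustar_eq: "Ustar T (Uop T (Pproj M x)) i = (\<Sum>s\<in>T. complex_of_real (tau T s) * gfun M x i s)"
  unfolding Ustar_def Uop_eq gfun_eq Umat_def
proof (intro sum.cong refl)
  fix s
  have "complex_of_real (sqrt (tau T s)) * complex_of_real (sqrt (tau T s)) = complex_of_real (tau T s)"
  proof -
    have "sqrt (tau T s) * sqrt (tau T s) = tau T s" using tau_nonneg[of T s] by simp
    then show ?thesis by (simp only: of_real_mult[symmetric])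
  qed
  then show "cnj (complex_of_real (sqrt (tau T s)) * phi i s) * (complex_of_real (sqrt (tau T s)) * tp (idx M) x s) =
         complex_of_real (tau T s) * (cnj (phi i s) * tp (idx M) x s)"
  proof -
    let ?a = "complex_of_real (sqrt (tau T s))"
    have "cnj (?a * phi i s) * (?a * tp (idx M) x s) = (?a * ?a) * (cnj (phi i s) * tp (idx M) x s)"
      by (simp only: complex_cnj_mult complex_cnj_complex_of_real mult_ac)
    then show ?thesis using \<open>?a * ?a = complex_of_real (tau T s)\<close> by simp
  qed
qed

lemma norm_dco: "norm (dco c j) = norm (c j) * (pi * \<bar>real_of_int j\<bar>)"
  unfolding dco_def by (simp add: norm_mult abs_mult)

lemma sum_sq_le:
  assumes "\<forall>j. cmod (x j) \<le> 1"
  shows "(\<Sum>j\<in>idx M. (norm (x j))^2) \<le> 2 * real M"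
proof -
  have "(\<Sum>j\<in>idx M. (norm (x j))^2) \<le> (\<Sum>j\<in>idx M. 1)"
    using assms by (intro sum_mono power_le_one) auto
  then show ?thesis by (simp add: card_idx)
qed



lemma l1_p:
  assumes x: "\<forall>j. cmod (x j) \<le> 1"
  shows "integral {-1..1} (\<lambda>u. norm (tp (idx M) x u)) \<le> 2 * sqrt (2 * real M)"
proof -
  have "sqrt (\<Sum>j\<in>idx M. (norm (x j))^2) \<le> sqrt (2 * real M)"
    using sum_sq_le[OF x, of M] by simp
  then show ?thesis using l1_bound[OF finite_idx, of M x] by linarith
qed

lemma l1_dp:
  assumes x: "\<forall>j. cmod (x j) \<le> 1"
  shows "integral {-1..1} (\<lambda>u. norm (tp (idx M) (dco x) u)) \<le> 2 * (pi * real M * sqrt (2 * real M))"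
proof -
  have "(\<Sum>j\<in>idx M. (norm (dco x j))^2) \<le> (\<Sum>j\<in>idx M. (norm (x j))^2 * (pi * real M)^2)"
  proof (intro sum_mono)
    fix j assume "j \<in> idx M"
    then have "pi * \<bar>real_of_int j\<bar> \<le> pi * real M" using idx_abs by auto
    then have "(pi * \<bar>real_of_int j\<bar>)^2 \<le> (pi * real M)^2" by (intro power_mono) auto
    then show "(norm (dco x j))^2 \<le> (norm (x j))^2 * (pi * real M)^2"
      unfolding norm_dco power_mult_distrib by (intro mult_left_mono) auto
  qed
  also have "\<dots> = (\<Sum>j\<in>idx M. (norm (x j))^2) * (pi * real M)^2"
    by (simp only: sum_distrib_right)
  also have "\<dots> \<le> 2 * real M * (pi * real M)^2"
    using sum_sq_le[OF x, of M] by (intro mult_right_mono) auto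
  finally have "sqrt (\<Sum>j\<in>idx M. (norm (dco x j))^2) \<le> sqrt (2 * real M * (pi * real M)^2)" by simp
  also have "\<dots> = pi * real M * sqrt (2 * real M)" by (simp add: real_sqrt_mult)
  finally show ?thesis
    using l1_bound[OF finite_idx, of M "dco x"] by linarith
qed

lemma core1:
  assumes T: "finite T" "T \<noteq> {}" "T \<subseteq> {-1..1}" and hM: "density T * real M \<le> 1"
    and x: "\<forall>j. cmod (x j) \<le> 1"
  shows "norm (\<Sum>s\<in>T. complex_of_real (tau T s) * gfun M x i s) \<le> sqrt 2 * (1 + 2 * pi) * sqrt (real M)"
proof -
  define h where "h = density T"
  have h0: "0 \<le> h" unfolding h_def by (rule density_nonneg[OF T])
  define A where "A = integral {-1..1} (\<lambda>u. norm (tp (idx M) x u))"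
  define B where "B = integral {-1..1} (\<lambda>u. norm (tp (idx M) (dco x) u))"
  have "norm (\<Sum>s\<in>T. complex_of_real (tau T s) * gfun M x i s) \<le> (\<Sum>s\<in>T. norm (complex_of_real (tau T s) * gfun M x i s))"
    by (rule norm_sum)
  also have "\<dots> = (\<Sum>s\<in>T. (1/2) * (measure lborel (voronoi T s) * norm (tp (idx M) x s)))"
    by (intro sum.cong refl) (simp add: gfun_eq norm_mult tau_def)
  also have "\<dots> = (1/2) * (\<Sum>s\<in>T. measure lborel (voronoi T s) * norm (tp (idx M) x s))"
    by (simp only: sum_distrib_left)
  also have "\<dots> \<le> (1/2) * (A + 2 * h * B)"
    unfolding h_def A_def B_def by (intro mult_left_mono quad1[OF T tp_deriv continuous_tp]) auto
  also have "\<dots> \<le> (1/2) * (2 * sqrt (2 * real M) + 2 * h * (2 * (pi * real M * sqrt (2 * real M))))"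
  proof -
    have "2 * h * B \<le> 2 * h * (2 * (pi * real M * sqrt (2 * real M)))"
      unfolding B_def using h0 l1_dp[OF x, of M] by (intro mult_left_mono) auto
    from mult_left_mono[OF add_mono[OF l1_p[OF x, of M] this], of "1/2"]
    show ?thesis unfolding A_def by simp
  qed
  also have "\<dots> = sqrt (2 * real M) * (1 + 2 * pi * (h * real M))" by (simp add: algebra_simps)
  also have "\<dots> \<le> sqrt (2 * real M) * (1 + 2 * pi * 1)"
    using hM h0 unfolding h_def by (intro mult_left_mono add_left_mono) auto
  also have "\<dots> = sqrt 2 * (1 + 2 * pi) * sqrt (real M)" by (simp add: real_sqrt_mult)
  finally show ?thesis .
qed


lemma tp_int0:
  assumes "finite J" "0 \<notin> J"
  shows "integral {-1..1} (tp J c) = 0"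
proof -
  have "((\<lambda>t. \<Sum>j\<in>J. c j * phi j t) has_integral (\<Sum>j\<in>J. c j * (if j = 0 then 2 else 0))) {-1..1}"
    using assms(1) by (intro has_integral_sum has_integral_mult_right phi_integral)
  moreover have "(\<Sum>j\<in>J. c j * (if j = 0 then 2 else 0)) = 0"
    using assms(2) by (intro sum.neutral) auto
  ultimately show ?thesis unfolding tp_def by (simp add: integral_unique)
qed

lemma gfun_tp: "gfun M x i t = tp ((\<lambda>j. j - i) ` idx M) (\<lambda>k. x (k + i)) t"
proof -
  have inj: "inj_on (\<lambda>j. j - i) (idx M)" by (auto simp: inj_on_def)
  show ?thesis unfolding gfun_def tp_def sum.reindex[OF inj] by (simp add: o_def)
qed

lemma core2:
  assumes T: "finite T" "T \<noteq> {}" "T \<subseteq> {-1..1}"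
    and x: "\<forall>j. cmod (x j) \<le> 1" and i: "i \<notin> idx R" and MR: "M \<le> R"
  shows "norm (\<Sum>s\<in>T. complex_of_real (tau T s) * gfun M x i s)
     \<le> 4 * pi * sqrt 2 * density T * sqrt (real M) * \<bar>real_of_int i\<bar>"
proof -
  define J where "J = (\<lambda>j. j - i) ` idx M"
  define c where "c = (\<lambda>k. x (k + i))"
  define h where "h = density T"
  have h0: "0 \<le> h" unfolding h_def by (rule density_nonneg[OF T])
  have fJ: "finite J" unfolding J_def by simp
  have iabs: "real M \<le> \<bar>real_of_int i\<bar>" using i MR unfolding idx_def by auto
  have "i \<notin> idx M" using i MR unfolding idx_def by auto
  then have J0: "0 \<notin> J" unfolding J_def by auto
  have g: "gfun M x i = tp J c" unfolding J_def c_def by (rule ext) (rule gfun_tp)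
  have "(\<Sum>s\<in>T. complex_of_real (tau T s) * gfun M x i s) =
     (1/2) *\<^sub>R ((\<Sum>s\<in>T. measure lborel (voronoi T s) *\<^sub>R tp J c s) - integral {-1..1} (tp J c))"
    unfolding tp_int0[OF fJ J0] g by (simp add: tau_def scaleR_sum_right scaleR_conv_of_real sum_divide_distrib[symmetric])
  then have "norm (\<Sum>s\<in>T. complex_of_real (tau T s) * gfun M x i s) =
     (1/2) * norm ((\<Sum>s\<in>T. measure lborel (voronoi T s) *\<^sub>R tp J c s) - integral {-1..1} (tp J c))"
    by simp
  also have "\<dots> \<le> (1/2) * (2 * h * integral {-1..1} (\<lambda>u. norm (tp J (dco c) u)))"
    unfolding h_def by (intro mult_left_mono quad2[OF T tp_deriv continuous_tp]) auto
  also have "\<dots> = h * integral {-1..1} (\<lambda>u. norm (tp J (dco c) u))" by simp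
  also have "\<dots> \<le> h * (2 * (2 * pi * \<bar>real_of_int i\<bar> * sqrt (2 * real M)))"
  proof (intro mult_left_mono h0)
    have "(\<Sum>k\<in>J. (norm (dco c k))^2) = (\<Sum>j\<in>idx M. (norm (x j))^2 * (pi * \<bar>real_of_int (j - i)\<bar>)^2)"
    proof -
      have inj: "inj_on (\<lambda>j. j - i) (idx M)" by (auto simp: inj_on_def)
      show ?thesis unfolding J_def sum.reindex[OF inj] norm_dco c_def power_mult_distrib by (simp add: o_def)
    qed
    also have "\<dots> \<le> (\<Sum>j\<in>idx M. (norm (x j))^2 * (2 * pi * \<bar>real_of_int i\<bar>)^2)"
    proof (intro sum_mono mult_left_mono)
      fix j assume "j \<in> idx M"
      then have "\<bar>real_of_int j\<bar> \<le> real M" by (rule idx_abs)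
      then have "\<bar>real_of_int (j - i)\<bar> \<le> 2 * \<bar>real_of_int i\<bar>" using iabs by linarith
      then have "pi * \<bar>real_of_int (j - i)\<bar> \<le> pi * (2 * \<bar>real_of_int i\<bar>)" by (intro mult_left_mono) auto
      then show "(pi * \<bar>real_of_int (j - i)\<bar>)^2 \<le> (2 * pi * \<bar>real_of_int i\<bar>)^2"
        by (intro power_mono) (auto simp: mult_ac)
    qed auto
    also have "\<dots> = (\<Sum>j\<in>idx M. (norm (x j))^2) * (2 * pi * \<bar>real_of_int i\<bar>)^2"
      by (simp only: sum_distrib_right)
    also have "\<dots> \<le> 2 * real M * (2 * pi * \<bar>real_of_int i\<bar>)^2"
      using sum_sq_le[OF x, of M] by (intro mult_right_mono) auto
    finally have "sqrt (\<Sum>k\<in>J. (norm (dco c k))^2) \<le> sqrt (2 * real M * (2 * pi * \<bar>real_of_int i\<bar>)^2)" by simp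
    also have "\<dots> = 2 * pi * \<bar>real_of_int i\<bar> * sqrt (2 * real M)" by (simp add: real_sqrt_mult)
    finally show "integral {-1..1} (\<lambda>u. norm (tp J (dco c) u)) \<le> 2 * (2 * pi * \<bar>real_of_int i\<bar> * sqrt (2 * real M))"
      using l1_bound[OF fJ, of "dco c"] by linarith
  qed
  also have "\<dots> = 4 * pi * sqrt 2 * h * sqrt (real M) * \<bar>real_of_int i\<bar>"
    by (simp add: real_sqrt_mult mult_ac)
  finally show ?thesis unfolding h_def .
qed



lemma val_eq:
  "cmod (Pperp R (Winv w (Ustar T (Uop T (Pproj M x)))) i) =
   (if i \<in> idx R then 0 else norm (\<Sum>s\<in>T. complex_of_real (tau T s) * gfun M x i s) / \<bar>w i\<bar>)"
  unfolding Pperp_def Winv_def Ustar_eq by (simp add: norm_divide)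

theorem lemma8p4:
  shows "(\<exists>C::real. \<forall>(T::real set) (w::int \<Rightarrow> real) (M::nat) (R::nat).
            finite T \<and> T \<noteq> {} \<and> T \<subseteq> {-1..1} \<and> (\<forall>i. w i \<ge> 1) \<and>
            density T * real M \<le> 1 \<longrightarrow>
            Fnorm T w M R \<le> C * sqrt (real M) * (SUP i\<in>- idx R. 1 / w i))
       \<and> (\<forall>c>0::real. \<exists>C::real. \<forall>(T::real set) (w::int \<Rightarrow> real) (M::nat) (R::nat).
            finite T \<and> T \<noteq> {} \<and> T \<subseteq> {-1..1} \<and> (\<forall>i. w i \<ge> 1) \<and>
            density T * real M \<le> 1 \<and> (\<forall>i. w i \<ge> c * \<bar>real_of_int i\<bar>) \<and> R \<ge> M \<longrightarrow>
            Fnorm T w M R \<le> C * density T * sqrt (real M) *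
              (SUP i\<in>- idx R. \<bar>real_of_int i\<bar> / w i))"
proof (intro conjI allI impI)
  define C1 where "C1 = sqrt 2 * (1 + 2 * pi)"
  have C10: "0 \<le> C1" unfolding C1_def by (simp add: pi_ge_zero)
  show "\<exists>C::real. \<forall>(T::real set) (w::int \<Rightarrow> real) (M::nat) (R::nat).
            finite T \<and> T \<noteq> {} \<and> T \<subseteq> {-1..1} \<and> (\<forall>i. w i \<ge> 1) \<and>
            density T * real M \<le> 1 \<longrightarrow>
            Fnorm T w M R \<le> C * sqrt (real M) * (SUP i\<in>- idx R. 1 / w i)"
  proof (intro exI[of _ C1] allI impI)
    fix T :: "real set" and w :: "int \<Rightarrow> real" and M R :: nat
    assume H: "finite T \<and> T \<noteq> {} \<and> T \<subseteq> {-1..1} \<and> (\<forall>i. w i \<ge> 1) \<and> density T * real M \<le> 1"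
    then have T: "finite T" "T \<noteq> {}" "T \<subseteq> {-1..1}" and w1: "\<And>i. w i \<ge> 1"
      and hM: "density T * real M \<le> 1" by auto
    define B where "B = (SUP i\<in>- idx R. 1 / w i)"
    have bdd: "bdd_above ((\<lambda>i. 1 / w i) ` (- idx R))"
    proof (rule bdd_aboveI2[of _ _ 1])
      fix i show "1 / w i \<le> 1" using w1[of i] by simp
    qed
    have iB: "1 / w i \<le> B" if "i \<notin> idx R" for i
      unfolding B_def by (rule cSUP_upper[OF _ bdd]) (use that in auto)
    have RB: "int R \<notin> idx R" unfolding idx_def by auto
    have B0: "0 \<le> B" using iB[OF RB] w1[of "int R"] by (smt (verit) divide_pos_pos)
    show "Fnorm T w M R \<le> C1 * sqrt (real M) * B"
      unfolding Fnorm_def B_def[symmetric]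
    proof (rule cSUP_least)
      show "{x :: int \<Rightarrow> complex. \<forall>j. cmod (x j) \<le> 1} \<noteq> {}" by (auto intro!: exI[of _ "\<lambda>_. 0"])
      fix x :: "int \<Rightarrow> complex" assume "x \<in> {x. \<forall>j. cmod (x j) \<le> 1}"
      then have x: "\<forall>j. cmod (x j) \<le> 1" by simp
      show "(SUP i. cmod (Pperp R (Winv w (Ustar T (Uop T (Pproj M x)))) i)) \<le> C1 * sqrt (real M) * B"
      proof (rule cSUP_least)
        fix i
        show "cmod (Pperp R (Winv w (Ustar T (Uop T (Pproj M x)))) i) \<le> C1 * sqrt (real M) * B"
        proof (cases "i \<in> idx R")
          case True
          then show ?thesis using C10 B0 by (simp add: val_eq)
        next
          case False
          have wp: "0 < w i" using w1[of i] by simp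
          have "cmod (Pperp R (Winv w (Ustar T (Uop T (Pproj M x)))) i)
              = norm (\<Sum>s\<in>T. complex_of_real (tau T s) * gfun M x i s) / w i"
            using False wp by (simp add: val_eq)
          also have "\<dots> \<le> C1 * sqrt (real M) / w i"
            unfolding C1_def using core1[OF T hM x, of i] wp by (intro divide_right_mono) auto
          also have "\<dots> = C1 * sqrt (real M) * (1 / w i)" by simp
          also have "\<dots> \<le> C1 * sqrt (real M) * B"
            using iB[OF False] C10 by (intro mult_left_mono) auto
          finally show ?thesis .
        qed
      qed simp
    qed
  qed
next
  fix c :: real assume c: "c > 0"
  define C2 where "C2 = 4 * pi * sqrt 2"
  have C20: "0 \<le> C2" unfolding C2_def by (simp add: pi_ge_zero)
  show "\<exists>C::real. \<forall>(T::real set) (w::int \<Rightarrow> real) (M::nat) (R::nat).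
            finite T \<and> T \<noteq> {} \<and> T \<subseteq> {-1..1} \<and> (\<forall>i. w i \<ge> 1) \<and>
            density T * real M \<le> 1 \<and> (\<forall>i. w i \<ge> c * \<bar>real_of_int i\<bar>) \<and> R \<ge> M \<longrightarrow>
            Fnorm T w M R \<le> C * density T * sqrt (real M) *
              (SUP i\<in>- idx R. \<bar>real_of_int i\<bar> / w i)"
  proof (intro exI[of _ C2] allI impI)
    fix T :: "real set" and w :: "int \<Rightarrow> real" and M R :: nat
    assume H: "finite T \<and> T \<noteq> {} \<and> T \<subseteq> {-1..1} \<and> (\<forall>i. w i \<ge> 1) \<and>
            density T * real M \<le> 1 \<and> (\<forall>i. w i \<ge> c * \<bar>real_of_int i\<bar>) \<and> R \<ge> M"
    then have T: "finite T" "T \<noteq> {}" "T \<subseteq> {-1..1}" and w1: "\<And>i. w i \<ge> 1"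
      and wc: "\<And>i. w i \<ge> c * \<bar>real_of_int i\<bar>" and MR: "M \<le> R" by auto
    have h0: "0 \<le> density T" by (rule density_nonneg[OF T])
    define B where "B = (SUP i\<in>- idx R. \<bar>real_of_int i\<bar> / w i)"
    have bdd: "bdd_above ((\<lambda>i. \<bar>real_of_int i\<bar> / w i) ` (- idx R))"
    proof (rule bdd_aboveI2[of _ _ "1/c"])
      fix i
      have wp: "0 < w i" using w1[of i] by simp
      have "\<bar>real_of_int i\<bar> \<le> w i / c" using wc[of i] c by (simp add: field_simps)
      then show "\<bar>real_of_int i\<bar> / w i \<le> 1 / c" using wp c by (simp add: field_simps)
    qed
    have iB: "\<bar>real_of_int i\<bar> / w i \<le> B" if "i \<notin> idx R" for i
      unfolding B_def by (rule cSUP_upper[OF _ bdd]) (use that in auto)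
    have RB: "int R \<notin> idx R" unfolding idx_def by auto
    have B0: "0 \<le> B" using iB[OF RB] w1[of "int R"] by (smt (verit) divide_nonneg_pos abs_ge_zero)
    have K0: "0 \<le> C2 * density T * sqrt (real M)" using C20 h0 by simp
    show "Fnorm T w M R \<le> C2 * density T * sqrt (real M) * B"
      unfolding Fnorm_def B_def[symmetric]
    proof (rule cSUP_least)
      show "{x :: int \<Rightarrow> complex. \<forall>j. cmod (x j) \<le> 1} \<noteq> {}" by (auto intro!: exI[of _ "\<lambda>_. 0"])
      fix x :: "int \<Rightarrow> complex" assume "x \<in> {x. \<forall>j. cmod (x j) \<le> 1}"
      then have x: "\<forall>j. cmod (x j) \<le> 1" by simp
      show "(SUP i. cmod (Pperp R (Winv w (Ustar T (Uop T (Pproj M x)))) i)) \<le> C2 * density T * sqrt (real M) * B"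
      proof (rule cSUP_least)
        fix i
        show "cmod (Pperp R (Winv w (Ustar T (Uop T (Pproj M x)))) i) \<le> C2 * density T * sqrt (real M) * B"
        proof (cases "i \<in> idx R")
          case True
          then show ?thesis using K0 B0 by (simp add: val_eq)
        next
          case False
          have wp: "0 < w i" using w1[of i] by simp
          have "cmod (Pperp R (Winv w (Ustar T (Uop T (Pproj M x)))) i)
              = norm (\<Sum>s\<in>T. complex_of_real (tau T s) * gfun M x i s) / w i"
            using False wp by (simp add: val_eq)
          also have "\<dots> \<le> C2 * density T * sqrt (real M) * \<bar>real_of_int i\<bar> / w i"
            unfolding C2_def using core2[OF T x False MR] wp by (intro divide_right_mono) auto
          also have "\<dots> = C2 * density T * sqrt (real M) * (\<bar>real_of_int i\<bar> / w i)" by simp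
          also have "\<dots> \<le> C2 * density T * sqrt (real M) * B"
            using iB[OF False] K0 by (intro mult_left_mono) auto
          finally show ?thesis .
        qed
      qed simp
    qed
  qed
qed

end
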